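(* Let $H$ be a finite-dimensional complex Hilbert space and let $\mathcal{B}(H)$ be the complex vector space of (bounded) linear operators $H\to H$. Then the map $$\mathrm{hs}_{\mathcal{B}}\colon \mathcal{B}(H)\longrightarrow \mathcal{B}(H)^{*}=\big(\overline{\mathcal{B}(H)}\multimap\mathbb{C}\big),\qquad \mathrm{hs}_{\mathcal{B}}(A)=\big(B\mapsto \mathrm{tr}(AB^{\dagger})\big)$$ coincides, for any choice of basis $|1\rangle,\dots,|n\rangle$ of $H$, with the basis-dependent duality isomorphism $\mathcal{B}(H)\cong\mathcal{B}(H)^*$ determined by the basis $\{|j\rangle\langle k|\}_{j,k}$ of $\mathcal{B}(H)$ (sending $\sum_{j,k}z_{jk}\,|j\rangle\langle k|$ to $\sum_{j,k} z_{jk}$ times the dual basis functional of $|j\rangle\langle k|$); in particular $\mathrm{hs}_{\mathcal{B}}$ is an isomorphism and it is independent of the choice of basis. Moreover these maps form a natural isomorphism $\mathcal{B}\circ(-)^{\dagger}\Rightarrow(-)^{*}\circ\mathcal{B}$ between functors $\mathbf{FdHilb}\to\mathbf{Vect}_{\mathbb{C}}^{\mathrm{op}}$; concretely, for every linear map $C\colon H\to K$ between finite-dimensional Hilbert spaces, $\mathcal{B}(C)^{*}\circ \mathrm{hs}_{\mathcal{B},K}=\mathrm{hs}_{\mathcal{B},H}\circ\mathcal{B}(C^{\dagger})$ as maps $\mathcal{B}(K)\to\mathcal{B}(H)^*$. Finally, the functors $\mathcal{B}\colon\mathbf{FdHilb}\to\mathbf{Vect}_{\mathbb{C}}$ and $\mathcal{B}\colon\mathbf{FdHilb}^{\mathrm{op}}\to\mathbf{Vect}_{\mathbb{C}}^{\mathrm{op}}$,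 together with the isomorphisms $\mathrm{hs}_{\mathcal{B}}$, form a map of adjunctions (in the sense of Mac Lane, Categories for the Working Mathematician, IV.7, with the functor squares commuting up to the natural isomorphisms $\mathrm{hs}_{\mathcal{B}}$) from the adjunction $(-)^{\dagger}\dashv(-)^{\dagger}$ between $\mathbf{FdHilb}$ and $\mathbf{FdHilb}^{\mathrm{op}}$ to the adjunction $(-)^{*}\dashv(-)^{*}$ between $\mathbf{Vect}_{\mathbb{C}}$ and $\mathbf{Vect}_{\mathbb{C}}^{\mathrm{op}}$.
   Context: $\mathbf{FdHilb}$ is the category of finite-dimensional complex Hilbert spaces with (bounded) linear maps; $C^{\dagger}$ denotes the adjoint (conjugate transpose) of $C$, and $(-)^{\dagger}\colon\mathbf{FdHilb}\to\mathbf{FdHilb}^{\mathrm{op}}$ is the identity on objects and $C\mapsto C^\dagger$ on maps; it is adjoint to itself (maps $V\to W$ correspond to maps $W\to V$ via $f\mapsto f^\dagger$). $\mathbf{Vect}_{\mathbb{C}}$ is the category of complex vector spaces and linear maps; $\overline{V}$ denotes the conjugate space of $V$ (same vectors, scalar multiplication $z\bullet_{\overline V}x=\overline{z}\bullet_V x$); $V\multimap W$ is the vector space of linear maps $V\to W$; $V^{*}=\overline{V}\multimap\mathbb{C}$, and on a linear map $C\colon V\to W$, $C^{*}\colon W^*\to V^*$ is $f\mapsto f\circ C$. The functor $(-)^*\colon\mathbf{Vect}_{\mathbb{C}}\to\mathbf{Vect}_{\mathbb{C}}^{\mathrm{op}}$ is adjoint to itself via the correspondence between linear maps $V\to\overline{W}\multimap\mathbb{C}$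 and $W\to\overline{V}\multimap\mathbb{C}$ (swapping arguments). The functor $\mathcal{B}\colon\mathbf{FdHilb}\to\mathbf{Vect}_{\mathbb{C}}$ sends $H$ to $\mathcal{B}(H)$ and $C\colon H\to K$ to $\mathcal{B}(C)(A)=CAC^{\dagger}$. $\mathrm{tr}$ denotes the trace. *)

theory Defs
  imports "HOL-Analysis.Analysis"
begin

text \<open>Finite-dimensional complex Hilbert spaces are modelled as \<open>complex ^ 'n\<close>
  (for a finite type \<open>'n\<close>) with the standard inner product; linear maps
  \<open>H \<rightarrow> K\<close> are matrices \<open>complex ^ 'n ^ 'm\<close>; \<open>\<B>(H)\<close> is \<open>complex ^ 'n ^ 'n\<close>.\<close>

definition cinner :: "complex ^ 'n \<Rightarrow> complex ^ 'n \<Rightarrow> complex" where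
  "cinner x y = (\<Sum>i\<in>UNIV. cnj (x $ i) * y $ i)"

definition adj :: "complex ^ 'n ^ 'm \<Rightarrow> complex ^ 'm ^ 'n" where
  "adj A = (\<chi> i j. cnj (A $ j $ i))"

definition mtrace :: "complex ^ 'n ^ 'n \<Rightarrow> complex" where
  "mtrace A = (\<Sum>i\<in>UNIV. A $ i $ i)"

definition mscale :: "complex \<Rightarrow> complex ^ 'n ^ 'm \<Rightarrow> complex ^ 'n ^ 'm" where
  "mscale c A = (\<chi> i j. c * A $ i $ j)"

definition ketbra :: "complex ^ 'n \<Rightarrow> complex ^ 'n \<Rightarrow> complex ^ 'n ^ 'n" where
  "ketbra u v = (\<chi> i j. u $ i * cnj (v $ j))"

definition orthonormal_basis :: "('n::finite \<Rightarrow> complex ^ 'n) \<Rightarrow> bool" where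
  "orthonormal_basis u \<longleftrightarrow> (\<forall>j k. cinner (u j) (u k) = (if j = k then 1 else 0))"

text \<open>Linear maps from the conjugate space to \<open>\<complex>\<close>, i.e. conjugate-linear functionals:
  the elements of \<open>V\<^sup>* = \<overline>V \<multimap> \<complex>\<close> for \<open>V = \<B>(H)\<close>.\<close>
definition conj_linear_fun :: "(complex ^ 'n ^ 'm \<Rightarrow> complex) \<Rightarrow> bool" where
  "conj_linear_fun f \<longleftrightarrow> (\<forall>A B. f (A + B) = f A + f B) \<and> (\<forall>c A. f (mscale c A) = cnj c * f A)"

definition lin_map :: "(complex ^ 'n ^ 'm \<Rightarrow> ('b \<Rightarrow> complex)) \<Rightarrow> bool" where
  "lin_map F \<longleftrightarrow> (\<forall>A B x. F (A + B) x = F A x + F B x) \<and> (\<forall>c A x. F (mscale c A) x = c * F A x)"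

definition Bmap :: "complex ^ 'n ^ 'm \<Rightarrow> complex ^ 'n ^ 'n \<Rightarrow> complex ^ 'm ^ 'm" where
  "Bmap C A = C ** A ** adj C"

definition hsB :: "complex ^ 'n ^ 'n \<Rightarrow> (complex ^ 'n ^ 'n \<Rightarrow> complex)" where
  "hsB A = (\<lambda>B. mtrace (A ** adj B))"

definition dual_map :: "('a \<Rightarrow> 'b) \<Rightarrow> ('b \<Rightarrow> complex) \<Rightarrow> ('a \<Rightarrow> complex)" where
  "dual_map F f = f \<circ> F"

text \<open>The adjunction bijection of \<open>(-)\<^sup>* \<turnstile> (-)\<^sup>*\<close>: a linear map \<open>V \<rightarrow> \<overline>W \<multimap> \<complex>\<close>
  corresponds to \<open>W \<rightarrow> \<overline>V \<multimap> \<complex>\<close> by swapping arguments; since the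
  values are regarded in the conjugate spaces, the swap carries a complex conjugation.\<close>
definition swap_dual :: "('v \<Rightarrow> 'w \<Rightarrow> complex) \<Rightarrow> ('w \<Rightarrow> 'v \<Rightarrow> complex)" where
  "swap_dual \<phi> = (\<lambda>w v. cnj (\<phi> v w))"

end

theory Submission
  imports Defs
begin

lemma hs_eq: "hsB A B = (\<Sum>i\<in>UNIV. \<Sum>j\<in>UNIV. A$i$j * cnj (B$i$j))"
  unfolding hsB_def mtrace_def matrix_matrix_mult_def adj_def by simp

lemma hs_sum1: "hsB (sum f S) B = (\<Sum>x\<in>S. hsB (f x) B)"
proof (cases "finite S")
  case True then show ?thesis
    by (induction S rule: finite_induct) (auto simp: hs_eq distrib_right sum.distrib)
qed (simp add: hs_eq)

lemma hs_sum2: "hsB A (sum f S) = (\<Sum>x\<in>S. hsB A (f x))"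
proof (cases "finite S")
  case True then show ?thesis
    by (induction S rule: finite_induct) (auto simp: hs_eq distrib_left sum.distrib)
qed (simp add: hs_eq)

lemma hs_scale1: "hsB (mscale c A) B = c * hsB A B"
  by (simp add: hs_eq mscale_def sum_distrib_left mult.assoc)
lemma hs_scale2: "hsB A (mscale c B) = cnj c * hsB A B"
  by (simp add: hs_eq mscale_def sum_distrib_left mult_ac)
lemma hs_add1: "hsB (A + A') B = hsB A B + hsB A' B"
  by (simp add: hs_eq distrib_right sum.distrib)
lemma hs_add2: "hsB A (B + B') = hsB A B + hsB A B'"
  by (simp add: hs_eq distrib_left sum.distrib)

lemma hs_ketbra: "hsB (ketbra a b) (ketbra c d) = cinner c a * cinner b d"
  unfolding hs_eq ketbra_def cinner_def sum_product
  by (simp add: mult_ac)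

definition E :: "'n \<Rightarrow> 'n \<Rightarrow> complex^'n^'n" where
  "E i j = (\<chi> a b. if a = i \<and> b = j then 1 else 0)"

lemma sum2_delta: fixes i :: "'a::finite" and j :: "'b::finite" shows "(\<Sum>a\<in>UNIV. \<Sum>b\<in>UNIV. if a = i \<and> b = j then f a b else (0::'c::comm_monoid_add)) = f i j"
proof -
  have "(\<Sum>a\<in>UNIV. \<Sum>b\<in>UNIV. if a = i \<and> b = j then f a b else 0) = (\<Sum>a\<in>UNIV. if a = i then (\<Sum>b\<in>UNIV. if b = j then f a b else 0) else 0)"
    by (rule sum.cong) auto
  also have "\<dots> = f i j" by (simp add: sum.delta)
  finally show ?thesis .
qed

lemma sum2_delta': fixes i :: "'a::finite" and j :: "'b::finite" shows "(\<Sum>a\<in>UNIV. \<Sum>b\<in>UNIV. if i = a \<and> j = b then f a b else (0::'c::comm_monoid_add)) = f i j"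
  using sum2_delta[of i j f] by (simp add: eq_commute)

lemma hs_E: "hsB A (E i j) = A$i$j"
  unfolding hs_eq E_def by (simp add: if_distrib sum2_delta cong: if_cong)

lemma decomp: "B = (\<Sum>i\<in>UNIV. \<Sum>j\<in>UNIV. mscale (B$i$j) (E i j))"
  by (simp add: vec_eq_iff mscale_def E_def if_distrib sum2_delta' cong: if_cong)

lemma cl_sum: assumes "conj_linear_fun f" shows "f (sum g S) = (\<Sum>x\<in>S. f (g x))"
proof (cases "finite S")
  case True
  have add: "f (A + B) = f A + f B" for A B using assms unfolding conj_linear_fun_def by blast
  have "f 0 = f (0 + 0)" by simp
  then have z: "f 0 = 0" using add[of 0 0] by simp
  from True show ?thesis by (induction S rule: finite_induct) (auto simp: z add)
next
  case False
  have add: "f (A + B) = f A + f B" for A B using assms unfolding conj_linear_fun_def by blast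
  have "f 0 = f (0 + 0)" by simp
  then have z: "f 0 = 0" using add[of 0 0] by simp
  with False show ?thesis by simp
qed

lemma adj_adj[simp]: "adj (adj A) = A" by (simp add: adj_def vec_eq_iff)
lemma adj_mult: "adj (A ** B) = adj B ** adj A"
  by (simp add: adj_def vec_eq_iff matrix_matrix_mult_def mult.commute)
lemma tr_cyc: "mtrace (A ** B) = mtrace (B ** A)"
  unfolding mtrace_def matrix_matrix_mult_def
  by (simp, subst sum.swap) (simp add: mult.commute)
lemma tr_adj: "cnj (mtrace A) = mtrace (adj A)"
  by (simp add: mtrace_def adj_def)

theorem proposition2p1:
  fixes u :: "'n::finite \<Rightarrow> complex ^ 'n"
  assumes onb: "orthonormal_basis u"
  shows
    "(\<forall>(z :: 'n \<Rightarrow> 'n \<Rightarrow> complex) (w :: 'n \<Rightarrow> 'n \<Rightarrow> complex).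
        hsB (\<Sum>j\<in>UNIV. \<Sum>k\<in>UNIV. mscale (z j k) (ketbra (u j) (u k)))
            (\<Sum>j\<in>UNIV. \<Sum>k\<in>UNIV. mscale (w j k) (ketbra (u j) (u k)))
        = (\<Sum>j\<in>UNIV. \<Sum>k\<in>UNIV. z j k * cnj (w j k)))
   \<and> lin_map (hsB :: complex ^ 'n ^ 'n \<Rightarrow> _)
   \<and> (\<forall>A :: complex ^ 'n ^ 'n. conj_linear_fun (hsB A))
   \<and> bij_betw (hsB :: complex ^ 'n ^ 'n \<Rightarrow> _) UNIV {f. conj_linear_fun f}
   \<and> (\<forall>C :: complex ^ 'n ^ 'm.
        dual_map (Bmap C) \<circ> hsB = hsB \<circ> Bmap (adj C))
   \<and> (\<forall>g :: complex ^ 'n ^ 'm.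
        hsB \<circ> Bmap (adj g) = swap_dual (hsB \<circ> Bmap g))"
proof -
  have ci: "cinner (u a) (u b) = (if a = b then 1 else 0)" for a b
    using onb unfolding orthonormal_basis_def by simp
  have P1: "hsB (\<Sum>j\<in>UNIV. \<Sum>k\<in>UNIV. mscale (z j k) (ketbra (u j) (u k)))
            (\<Sum>j\<in>UNIV. \<Sum>k\<in>UNIV. mscale (w j k) (ketbra (u j) (u k)))
        = (\<Sum>j\<in>UNIV. \<Sum>k\<in>UNIV. z j k * cnj (w j k))" for z w :: "'n \<Rightarrow> 'n \<Rightarrow> complex"
  proof -
    have kb: "hsB (ketbra (u j) (u k)) (ketbra (u j') (u k')) = (if j = j' \<and> k = k' then 1 else 0)" for j k j' k'
      by (simp add: hs_ketbra ci)
    have "hsB (\<Sum>j\<in>UNIV. \<Sum>k\<in>UNIV. mscale (z j k) (ketbra (u j) (u k)))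
            (\<Sum>j\<in>UNIV. \<Sum>k\<in>UNIV. mscale (w j k) (ketbra (u j) (u k)))
       = (\<Sum>j'\<in>UNIV. \<Sum>k'\<in>UNIV. \<Sum>j\<in>UNIV. \<Sum>k\<in>UNIV. cnj (w j' k') * (z j k * hsB (ketbra (u j) (u k)) (ketbra (u j') (u k'))))"
      by (simp add: hs_sum1 hs_sum2 hs_scale1 hs_scale2 sum_distrib_left)
    also have "\<dots> = (\<Sum>j'\<in>UNIV. \<Sum>k'\<in>UNIV. cnj (w j' k') * z j' k')"
    proof (intro sum.cong refl)
      fix j' k'
      have "(\<Sum>j\<in>UNIV. \<Sum>k\<in>UNIV. cnj (w j' k') * (z j k * hsB (ketbra (u j) (u k)) (ketbra (u j') (u k'))))
          = (\<Sum>j\<in>UNIV. \<Sum>k\<in>UNIV. if j' = j \<and> k' = k then cnj (w j' k') * z j k else 0)"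
        by (intro sum.cong refl) (auto simp: kb)
      also have "\<dots> = cnj (w j' k') * z j' k'" by (rule sum2_delta')
      finally show "(\<Sum>j\<in>UNIV. \<Sum>k\<in>UNIV. cnj (w j' k') * (z j k * hsB (ketbra (u j) (u k)) (ketbra (u j') (u k')))) = cnj (w j' k') * z j' k'" .
    qed
    also have "\<dots> = (\<Sum>j\<in>UNIV. \<Sum>k\<in>UNIV. z j k * cnj (w j k))" by (simp add: mult.commute)
    finally show ?thesis .
  qed
  have P2: "lin_map (hsB :: complex ^ 'n ^ 'n \<Rightarrow> _)"
    unfolding lin_map_def by (simp add: hs_add1 hs_scale1)
  have P3: "conj_linear_fun (hsB A)" for A :: "complex ^ 'n ^ 'n"
    unfolding conj_linear_fun_def by (simp add: hs_add2 hs_scale2)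
  have P4: "bij_betw (hsB :: complex ^ 'n ^ 'n \<Rightarrow> _) UNIV {f. conj_linear_fun f}"
    unfolding bij_betw_def
  proof
    show "inj (hsB :: complex ^ 'n ^ 'n \<Rightarrow> _)"
    proof (rule injI)
      fix A A' :: "complex ^ 'n ^ 'n" assume "hsB A = hsB A'"
      then have "hsB A (E i j) = hsB A' (E i j)" for i j by simp
      then show "A = A'" by (simp add: hs_E vec_eq_iff)
    qed
    show "range (hsB :: complex ^ 'n ^ 'n \<Rightarrow> _) = {f. conj_linear_fun f}"
    proof
      show "range (hsB :: complex ^ 'n ^ 'n \<Rightarrow> _) \<subseteq> {f. conj_linear_fun f}" using P3 by auto
      show "{f. conj_linear_fun f} \<subseteq> range (hsB :: complex ^ 'n ^ 'n \<Rightarrow> _)"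
      proof
        fix f :: "complex ^ 'n ^ 'n \<Rightarrow> complex" assume "f \<in> {f. conj_linear_fun f}"
        then have cl: "conj_linear_fun f" by simp
        have sc: "f (mscale c A) = cnj c * f A" for c A using cl unfolding conj_linear_fun_def by blast
        have "f B = hsB (\<chi> i j. f (E i j)) B" for B
        proof -
          have "f B = f (\<Sum>i\<in>UNIV. \<Sum>j\<in>UNIV. mscale (B$i$j) (E i j))" by (rule arg_cong[where f=f], rule decomp)
          also have "\<dots> = (\<Sum>i\<in>UNIV. \<Sum>j\<in>UNIV. cnj (B$i$j) * f (E i j))"
            by (simp add: cl_sum[OF cl] sc)
          also have "\<dots> = hsB (\<chi> i j. f (E i j)) B" by (simp add: hs_eq mult.commute)
          finally show ?thesis .
        qed
        then have "f = hsB (\<chi> i j. f (E i j))" by (rule ext)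
        then show "f \<in> range hsB" by blast
      qed
    qed
  qed
  have P5: "dual_map (Bmap C) \<circ> hsB = hsB \<circ> Bmap (adj C)" for C :: "complex ^ 'n ^ 'm"
  proof (intro ext)
    fix A :: "complex ^ 'm ^ 'm" and B :: "complex ^ 'n ^ 'n"
    have "(dual_map (Bmap C) \<circ> hsB) A B = mtrace (A ** adj (C ** B ** adj C))"
      by (simp add: dual_map_def hsB_def Bmap_def)
    also have "\<dots> = mtrace ((A ** C ** adj B) ** adj C)"
      by (simp add: adj_mult matrix_mul_assoc)
    also have "\<dots> = mtrace (adj C ** (A ** C ** adj B))" by (rule tr_cyc)
    also have "\<dots> = (hsB \<circ> Bmap (adj C)) A B"
      by (simp add: hsB_def Bmap_def matrix_mul_assoc)
    finally show "(dual_map (Bmap C) \<circ> hsB) A B = (hsB \<circ> Bmap (adj C)) A B" .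
  qed
  have P6: "hsB \<circ> Bmap (adj g) = swap_dual (hsB \<circ> Bmap g)" for g :: "complex ^ 'n ^ 'm"
  proof (intro ext)
    fix A :: "complex ^ 'm ^ 'm" and B :: "complex ^ 'n ^ 'n"
    have "swap_dual (hsB \<circ> Bmap g) A B = cnj (mtrace (g ** B ** adj g ** adj A))"
      by (simp add: swap_dual_def hsB_def Bmap_def)
    also have "\<dots> = mtrace ((A ** g ** adj B) ** adj g)"
      by (simp add: tr_adj adj_mult matrix_mul_assoc)
    also have "\<dots> = mtrace (adj g ** (A ** g ** adj B))" by (rule tr_cyc)
    also have "\<dots> = (hsB \<circ> Bmap (adj g)) A B"
      by (simp add: hsB_def Bmap_def matrix_mul_assoc)
    finally show "(hsB \<circ> Bmap (adj g)) A B = swap_dual (hsB \<circ> Bmap g) A B" by simp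
  qed
  show ?thesis by (intro conjI allI P1 P2 P3 P4 P5 P6)
qed

end
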